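(* Let $A=[0,1]\subseteq\mathbb R$ with the usual order, let $\neg x=\sqrt{1-x^2}$, and define a binary operation on $A$ by $x\cdot 1=x$ and $x\cdot y=\max(y-\neg x,\,0)$ for $y<1$. Then: (i) multiplication is monotone on the left: for all $x,y,z\in A$, $x\le y$ implies $z\cdot x\le z\cdot y$; (ii) for every $x\in(0,1)$, putting $y=1-\neg x$, there is no element $w\in A$ such that for all $z\in A$: $z\le w$ iff $x\cdot z\le y$. In particular, there is no binary operation $\backslash$ on $A$ with $x\cdot z\le y\iff z\le x\backslash y$ for all $x,y,z\in A$.
   Context: This is the multiplication $x\cdot y=\neg(\neg x\oplus\neg y)$ of the basic algebra on $[0,1]$ determined by the antitone involutions $\delta_1(x)=\sqrt{1-x^2}$ on $[0,1]$ and $\delta_a(x)=a-x$ on $[0,a]$ for $a<1$; the claim concerns only the explicit operation given. *)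

theory Defs
  imports Complex_Main
begin

definition A :: "real set" where "A = {0..1}"

definition negA :: "real \<Rightarrow> real" where "negA x = sqrt (1 - x^2)"

definition multA :: "real \<Rightarrow> real \<Rightarrow> real" where
  "multA x y = (if y = 1 then x else max (y - negA x) 0)"

end

theory Submission
  imports Defs
begin

lemma neg_ge: assumes "0 \<le> z" "z \<le> 1" shows "1 - z \<le> negA z"
proof -
  have "(1-z)^2 \<le> 1 - z^2" using assms by (simp add: power2_eq_square algebra_simps mult_left_le)
  hence "sqrt ((1-z)^2) \<le> sqrt (1-z^2)" by (rule real_sqrt_le_mono)
  thus ?thesis using assms by (simp add: negA_def)
qed

lemma neg_gt: assumes "0 < z" "z < 1" shows "1 - z < negA z"
proof -
  have "(1-z)^2 < 1 - z^2" using assms by (simp add: power2_eq_square algebra_simps mult_left_le)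
  hence "sqrt ((1-z)^2) < sqrt (1-z^2)" by (rule real_sqrt_less_mono)
  thus ?thesis using assms by (simp add: negA_def)
qed

lemma neg_le1: assumes "0 \<le> z" "z \<le> 1" shows "negA z \<le> 1" "0 \<le> negA z"
  using assms by (auto simp: negA_def power_le_one)

lemma part1: "\<forall>x\<in>A. \<forall>y\<in>A. \<forall>z\<in>A. x \<le> y \<longrightarrow> multA z x \<le> multA z y"
proof (intro ballI impI)
  fix x y z assume "x \<in> A" "y \<in> A" "z \<in> A" "x \<le> y"
  hence h: "0 \<le> x" "x \<le> 1" "0 \<le> y" "y \<le> 1" "0 \<le> z" "z \<le> 1" by (auto simp: A_def)
  have g: "1 - z \<le> negA z" using neg_ge h by auto
  show "multA z x \<le> multA z y"
    using h g \<open>x \<le> y\<close> by (auto simp: multA_def)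
qed

lemma part2: assumes "0 < x" "x < 1"
  shows "\<not> (\<exists>w\<in>A. \<forall>z\<in>A. (z \<le> w \<longleftrightarrow> multA x z \<le> 1 - negA x))"
proof
  assume "\<exists>w\<in>A. \<forall>z\<in>A. (z \<le> w \<longleftrightarrow> multA x z \<le> 1 - negA x)"
  then obtain w where w: "w \<in> A" and H: "\<forall>z\<in>A. (z \<le> w \<longleftrightarrow> multA x z \<le> 1 - negA x)" by blast
  have n: "1 - x < negA x" using neg_gt assms by auto
  have n1: "negA x \<le> 1" using neg_le1 assms by auto
  have lt: "\<And>z. z \<in> A \<Longrightarrow> (multA x z \<le> 1 - negA x) = (z < 1)"
    using n n1 by (auto simp: multA_def A_def)
  show False
  proof (cases "w < 1")
    case True
    have "(w+1)/2 \<in> A" using w by (auto simp: A_def)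
    moreover have "\<not> (w+1)/2 \<le> w" "(w+1)/2 < 1" using True by auto
    ultimately show False using H lt by blast
  next
    case False
    have "(1::real) \<in> A" by (simp add: A_def)
    thus False using H lt False by force
  qed
qed

theorem mainTheorem12:
  shows "(\<forall>x\<in>A. \<forall>y\<in>A. \<forall>z\<in>A. x \<le> y \<longrightarrow> multA z x \<le> multA z y)
    \<and> (\<forall>x. 0 < x \<and> x < 1 \<longrightarrow>
          \<not> (\<exists>w\<in>A. \<forall>z\<in>A. (z \<le> w \<longleftrightarrow> multA x z \<le> 1 - negA x)))
    \<and> \<not> (\<exists>r :: real \<Rightarrow> real \<Rightarrow> real.
          (\<forall>x\<in>A. \<forall>y\<in>A. r x y \<in> A) \<and>
          (\<forall>x\<in>A. \<forall>y\<in>A. \<forall>z\<in>A. (multA x z \<le> y \<longleftrightarrow> z \<le> r x y)))"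
proof (intro conjI)
  show "\<forall>x\<in>A. \<forall>y\<in>A. \<forall>z\<in>A. x \<le> y \<longrightarrow> multA z x \<le> multA z y" by (rule part1)
  show "\<forall>x. 0 < x \<and> x < 1 \<longrightarrow> \<not> (\<exists>w\<in>A. \<forall>z\<in>A. (z \<le> w \<longleftrightarrow> multA x z \<le> 1 - negA x))"
    using part2 by blast
  show "\<not> (\<exists>r :: real \<Rightarrow> real \<Rightarrow> real.
          (\<forall>x\<in>A. \<forall>y\<in>A. r x y \<in> A) \<and>
          (\<forall>x\<in>A. \<forall>y\<in>A. \<forall>z\<in>A. (multA x z \<le> y \<longleftrightarrow> z \<le> r x y)))"
  proof
    assume "\<exists>r :: real \<Rightarrow> real \<Rightarrow> real.
          (\<forall>x\<in>A. \<forall>y\<in>A. r x y \<in> A) \<and>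
          (\<forall>x\<in>A. \<forall>y\<in>A. \<forall>z\<in>A. (multA x z \<le> y \<longleftrightarrow> z \<le> r x y))"
    then obtain r where r1: "\<forall>x\<in>A. \<forall>y\<in>A. r x y \<in> A"
      and r2: "\<forall>x\<in>A. \<forall>y\<in>A. \<forall>z\<in>A. (multA x z \<le> y \<longleftrightarrow> z \<le> r x y)" by blast
    let ?x = "1/2::real"
    have xa: "?x \<in> A" by (simp add: A_def)
    have "0 \<le> negA ?x" "negA ?x \<le> 1" using neg_le1[of ?x] by auto
    hence ya: "1 - negA ?x \<in> A" by (simp add: A_def)
    have "\<exists>w\<in>A. \<forall>z\<in>A. (z \<le> w \<longleftrightarrow> multA ?x z \<le> 1 - negA ?x)"
      using r1 r2 xa ya by blast
    thus False using part2[of ?x] by simp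
  qed
qed

end
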